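(* Let $1<p<\infty$. For every $q\geq p$ we have $\ell_p\subset\ell_q$ (as sets of sequences), and every rectifiable curve in $\ell_p$ is also a rectifiable curve in $\ell_q$. Moreover, there exists a curve $\Gamma\subset\ell_p$ such that $\mathcal{H}^1_{\ell_q}(\Gamma)<\infty$ for every $q>p$, but $\mathcal{H}^1_{\ell_p}(\Gamma)=\infty$.
   Context: $\ell_r$ denotes the real Banach space of sequences $x=(x_1,x_2,\dots)$ with $|x|_r=(\sum_i|x_i|^r)^{1/r}<\infty$. A curve in a metric space is the image of a continuous map $[0,1]\to$ the space; it is rectifiable if its one-dimensional Hausdorff measure is finite. $\mathcal{H}^1_{\ell_r}$ denotes the one-dimensional Hausdorff measure computed with respect to the norm $|\cdot|_r$. *)

theory Defs
  imports "HOL-Analysis.Analysis"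
begin

text \<open>Sequences are modelled as functions nat \<Rightarrow> real (indexing from 0).\<close>

definition lp :: "real \<Rightarrow> (nat \<Rightarrow> real) set" where
  "lp r = {x. summable (\<lambda>i. \<bar>x i\<bar> powr r)}"

definition lp_norm :: "real \<Rightarrow> (nat \<Rightarrow> real) \<Rightarrow> real" where
  "lp_norm r x = (\<Sum>i. \<bar>x i\<bar> powr r) powr (1 / r)"

definition lp_dist :: "real \<Rightarrow> (nat \<Rightarrow> real) \<Rightarrow> (nat \<Rightarrow> real) \<Rightarrow> real" where
  "lp_dist r x y = lp_norm r (\<lambda>i. x i - y i)"

definition lp_curve :: "real \<Rightarrow> (nat \<Rightarrow> real) set \<Rightarrow> bool" where
  "lp_curve r \<Gamma> \<longleftrightarrow> (\<exists>\<gamma> :: real \<Rightarrow> (nat \<Rightarrow> real).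
      (\<forall>t\<in>{0..1}. \<gamma> t \<in> lp r) \<and>
      (\<forall>t\<in>{0..1}. \<forall>e>0. \<exists>d>0. \<forall>s\<in>{0..1}. \<bar>s - t\<bar> < d \<longrightarrow> lp_dist r (\<gamma> s) (\<gamma> t) < e) \<and>
      \<Gamma> = \<gamma> ` {0..1})"

definition lp_diam :: "real \<Rightarrow> (nat \<Rightarrow> real) set \<Rightarrow> ennreal" where
  "lp_diam r C = (SUP xy\<in>C \<times> C. ennreal (lp_dist r (fst xy) (snd xy)))"

definition lp_H1_delta :: "real \<Rightarrow> real \<Rightarrow> (nat \<Rightarrow> real) set \<Rightarrow> ennreal" where
  "lp_H1_delta r \<delta> A = (INF C\<in>{C :: nat \<Rightarrow> (nat \<Rightarrow> real) set.
       A \<subseteq> (\<Union>i. C i) \<and> (\<forall>i. C i \<subseteq> lp r \<and> lp_diam r (C i) \<le> ennreal \<delta>)}.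
       (\<Sum>i. lp_diam r (C i)))"

definition lp_H1 :: "real \<Rightarrow> (nat \<Rightarrow> real) set \<Rightarrow> ennreal" where
  "lp_H1 r A = (SUP \<delta>\<in>{0<..}. lp_H1_delta r \<delta> A)"

definition lp_rectifiable_curve :: "real \<Rightarrow> (nat \<Rightarrow> real) set \<Rightarrow> bool" where
  "lp_rectifiable_curve r \<Gamma> \<longleftrightarrow> lp_curve r \<Gamma> \<and> lp_H1 r \<Gamma> < \<infinity>"

end

theory Submission
  imports Defs
begin


lemma lp_nonneg_terms: "\<bar>x i\<bar> powr r \<ge> (0::real)" by simp

lemma lp_norm_mono:
  fixes p q :: real
  assumes p: "0 < p" and pq: "p \<le> q" and x: "x \<in> lp p"
  shows "x \<in> lp q \<and> lp_norm q x \<le> lp_norm p x"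
proof -
  have sp: "summable (\<lambda>i. \<bar>x i\<bar> powr p)" using x by (simp add: lp_def)
  define S where "S = (\<Sum>i. \<bar>x i\<bar> powr p)"
  have S0: "S \<ge> 0" unfolding S_def by (intro suminf_nonneg sp) simp
  define N where "N = S powr (1/p)"
  have N0: "N \<ge> 0" unfolding N_def by simp
  have term_le: "\<bar>x i\<bar> powr p \<le> S" for i
    unfolding S_def using sum_le_suminf[OF sp, of "{i}"] by simp
  have xN: "\<bar>x i\<bar> \<le> N" for i
  proof -
    have "\<bar>x i\<bar> = (\<bar>x i\<bar> powr p) powr (1/p)" using p by (simp add: powr_powr)
    also have "\<dots> \<le> S powr (1/p)" using term_le[of i] p by (intro powr_mono2) auto
    finally show ?thesis by (simp add: N_def)
  qed
  have bnd: "\<bar>x i\<bar> powr q \<le> \<bar>x i\<bar> powr p * N powr (q - p)" for i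
  proof (cases "x i = 0")
    case True then show ?thesis by simp
  next
    case False
    have "\<bar>x i\<bar> powr q = \<bar>x i\<bar> powr p * \<bar>x i\<bar> powr (q - p)"
      by (simp add: powr_add[symmetric])
    also have "\<dots> \<le> \<bar>x i\<bar> powr p * N powr (q - p)"
      using xN[of i] pq by (intro mult_left_mono powr_mono2) auto
    finally show ?thesis .
  qed
  have sq: "summable (\<lambda>i. \<bar>x i\<bar> powr q)"
    by (rule summable_comparison_test'[where g="\<lambda>i. \<bar>x i\<bar> powr p * N powr (q - p)"])
       (use bnd sp in \<open>auto intro: summable_mult2\<close>)
  have "(\<Sum>i. \<bar>x i\<bar> powr q) \<le> (\<Sum>i. \<bar>x i\<bar> powr p * N powr (q - p))"
    by (intro suminf_le bnd sq summable_mult2 sp)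
  also have "\<dots> = S * N powr (q - p)" unfolding S_def by (simp add: suminf_mult2[OF sp])
  also have "\<dots> = N powr q"
  proof (cases "S = 0")
    case True then show ?thesis by (simp add: N_def)
  next
    case False
    have "S = N powr p" unfolding N_def using S0 p by (simp add: powr_powr)
    then have "S * N powr (q - p) = N powr p * N powr (q - p)" by simp
    also have "\<dots> = N powr q" by (simp add: powr_add[symmetric])
    finally show ?thesis .
  qed
  finally have le: "(\<Sum>i. \<bar>x i\<bar> powr q) \<le> N powr q" .
  have "lp_norm q x = (\<Sum>i. \<bar>x i\<bar> powr q) powr (1/q)" by (simp add: lp_norm_def)
  also have "\<dots> \<le> (N powr q) powr (1/q)"
    using le p pq by (intro powr_mono2) (auto intro: suminf_nonneg sq)
  also have "\<dots> = N" using N0 p pq by (simp add: powr_powr)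
  also have "N = lp_norm p x" by (simp add: N_def S_def lp_norm_def)
  finally show ?thesis using sq by (simp add: lp_def)
qed

lemma lp_diff:
  assumes p: "0 < p" and x: "x \<in> lp p" and y: "y \<in> lp p"
  shows "(\<lambda>i. x i - y i) \<in> lp p"
proof -
  have b: "\<bar>x i - y i\<bar> powr p \<le> 2 powr p * (\<bar>x i\<bar> powr p + \<bar>y i\<bar> powr p)" for i
  proof -
    have "\<bar>x i - y i\<bar> \<le> 2 * max \<bar>x i\<bar> \<bar>y i\<bar>" by linarith
    then have "\<bar>x i - y i\<bar> powr p \<le> (2 * max \<bar>x i\<bar> \<bar>y i\<bar>) powr p"
      using p by (intro powr_mono2) auto
    also have "\<dots> = 2 powr p * max \<bar>x i\<bar> \<bar>y i\<bar> powr p" by (simp add: powr_mult)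
    also have "max \<bar>x i\<bar> \<bar>y i\<bar> powr p \<le> \<bar>x i\<bar> powr p + \<bar>y i\<bar> powr p"
      by (cases "\<bar>x i\<bar> \<le> \<bar>y i\<bar>") (auto simp: max_def)
    finally show ?thesis by simp
  qed
  have "summable (\<lambda>i. 2 powr p * (\<bar>x i\<bar> powr p + \<bar>y i\<bar> powr p))"
    using x y by (intro summable_mult summable_add) (auto simp: lp_def)
  then have "summable (\<lambda>i. \<bar>x i - y i\<bar> powr p)"
    by (rule summable_comparison_test') (use b in simp)
  then show ?thesis unfolding lp_def by simp
qed

lemma lp_dist_mono:
  assumes "0 < p" "p \<le> q" "x \<in> lp p" "y \<in> lp p"
  shows "lp_dist q x y \<le> lp_dist p x y"
  using lp_norm_mono[OF assms(1,2) lp_diff[OF assms(1,3,4)]] by (simp add: lp_dist_def)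

lemma lp_diam_mono:
  assumes "0 < p" "p \<le> q" "C \<subseteq> lp p"
  shows "lp_diam q C \<le> lp_diam p C"
  unfolding lp_diam_def
  by (rule SUP_mono) (use assms lp_dist_mono in \<open>fastforce intro: ennreal_leI\<close>)

lemma lp_H1_mono:
  assumes "0 < p" "p \<le> q"
  shows "lp_H1 q A \<le> lp_H1 p A"
proof -
  have "lp_H1_delta q d A \<le> lp_H1_delta p d A" for d
    unfolding lp_H1_delta_def
  proof (rule INF_greatest)
    fix C :: "nat \<Rightarrow> (nat \<Rightarrow> real) set" assume C: "C \<in> {C. A \<subseteq> (\<Union>i. C i) \<and> (\<forall>i. C i \<subseteq> lp p \<and> lp_diam p (C i) \<le> ennreal d)}"
    then have Cp: "C i \<subseteq> lp p" for i by auto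
    have Cq: "C i \<subseteq> lp q" for i using Cp[of i] lp_norm_mono[OF assms] by auto
    have dm: "lp_diam q (C i) \<le> lp_diam p (C i)" for i by (rule lp_diam_mono[OF assms Cp])
    have "C \<in> {C. A \<subseteq> (\<Union>i. C i) \<and> (\<forall>i. C i \<subseteq> lp q \<and> lp_diam q (C i) \<le> ennreal d)}"
      using C Cq dm order_trans by blast
    then have "(INF C\<in>{C. A \<subseteq> (\<Union>i. C i) \<and> (\<forall>i. C i \<subseteq> lp q \<and> lp_diam q (C i) \<le> ennreal d)}. \<Sum>i. lp_diam q (C i)) \<le> (\<Sum>i. lp_diam q (C i))"
      by (rule INF_lower)
    also have "\<dots> \<le> (\<Sum>i. lp_diam p (C i))" by (intro suminf_le dm) auto
    finally show "(INF C\<in>{C. A \<subseteq> (\<Union>i. C i) \<and> (\<forall>i. C i \<subseteq> lp q \<and> lp_diam q (C i) \<le> ennreal d)}. \<Sum>i. lp_diam q (C i)) \<le> (\<Sum>i. lp_diam p (C i))" .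
  qed
  then show ?thesis unfolding lp_H1_def by (intro SUP_mono) auto
qed

lemma lp_curve_mono:
  assumes "0 < p" "p \<le> q" "lp_curve p \<Gamma>"
  shows "lp_curve q \<Gamma>"
proof -
  obtain \<gamma> :: "real \<Rightarrow> nat \<Rightarrow> real" where g: "\<forall>t\<in>{0..1}. \<gamma> t \<in> lp p"
    "\<forall>t\<in>{0..1}. \<forall>e>0. \<exists>d>0. \<forall>s\<in>{0..1}. \<bar>s - t\<bar> < d \<longrightarrow> lp_dist p (\<gamma> s) (\<gamma> t) < e"
    "\<Gamma> = \<gamma> ` {0..1}" using assms(3) unfolding lp_curve_def by blast
  have "\<forall>t\<in>{0..1}. \<gamma> t \<in> lp q" using g(1) lp_norm_mono[OF assms(1,2)] by blast
  moreover have "\<forall>t\<in>{0..1}. \<forall>e>0. \<exists>d>0. \<forall>s\<in>{0..1}. \<bar>s - t\<bar> < d \<longrightarrow> lp_dist q (\<gamma> s) (\<gamma> t) < e"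
  proof (intro ballI allI impI)
    fix t :: real and e :: real assume t: "t \<in> {0..1}" and e: "(e::real) > 0"
    obtain d where d: "d > 0" "\<forall>s\<in>{0..1}. \<bar>s - t\<bar> < d \<longrightarrow> lp_dist p (\<gamma> s) (\<gamma> t) < e"
      using g(2) t e by blast
    show "\<exists>d>0. \<forall>s\<in>{0..1}. \<bar>s - t\<bar> < d \<longrightarrow> lp_dist q (\<gamma> s) (\<gamma> t) < e"
      using d g(1) t lp_dist_mono[OF assms(1,2)] by (meson le_less_trans)
  qed
  ultimately show ?thesis using g(3) unfolding lp_curve_def by blast
qed

lemma partA:
  assumes "1 < p" "p \<le> q"
  shows "lp p \<subseteq> lp q \<and> (\<forall>\<Gamma>. lp_rectifiable_curve p \<Gamma> \<longrightarrow> lp_rectifiable_curve q \<Gamma>)"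
proof -
  have p: "0 < p" using assms by simp
  show ?thesis
    using lp_norm_mono[OF p assms(2)] lp_curve_mono[OF p assms(2)] lp_H1_mono[OF p assms(2)]
    unfolding lp_rectifiable_curve_def by (meson le_less_trans subsetI)
qed




definition blk :: "nat \<Rightarrow> nat" where "blk i = (LEAST k. Suc i < 2 ^ Suc k)"

lemma blk_eq: assumes "2^K \<le> Suc i" "Suc i < 2 ^ Suc K" shows "blk i = K"
  unfolding blk_def
proof (rule Least_equality)
  show "Suc i < 2 ^ Suc K" by fact
  fix y assume y: "Suc i < 2 ^ Suc y"
  show "K \<le> y"
  proof (rule ccontr)
    assume "\<not> K \<le> y"
    then have "Suc y \<le> K" by simp
    then have "(2::nat) ^ Suc y \<le> 2 ^ K" by (intro power_increasing) auto
    with y assms(1) show False by simp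
  qed
qed

lemma blk_partial:
  fixes c :: "nat \<Rightarrow> real"
  shows "(\<Sum>i<2^K - 1. c (blk i)) = (\<Sum>k<K. 2^k * c k)"
proof (induction K)
  case 0 then show ?case by simp
next
  case (Suc K)
  have pos: "(1::nat) \<le> 2^K" by simp
  have e: "(2::nat)^Suc K - 1 = (2^K - 1) + 2^K" using pos by simp
  have "(\<Sum>i<2^Suc K - 1. c (blk i)) = (\<Sum>i\<in>{0..<2^K - 1}. c (blk i)) + (\<Sum>i\<in>{2^K - 1..<(2^K - 1) + 2^K}. c (blk i))"
    unfolding e atLeast0LessThan[symmetric] by (rule sum.atLeastLessThan_concat[symmetric]) auto
  also have "(\<Sum>i\<in>{2^K - 1..<(2^K - 1) + 2^K}. c (blk i)) = (\<Sum>i\<in>{(2::nat)^K - 1..<(2^K - 1) + 2^K}. c K)"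
  proof (rule sum.cong)
    fix i :: nat assume "i \<in> {2^K - 1..<(2^K - 1) + 2^K}"
    then have "2^K \<le> Suc i" "Suc i < 2 ^ Suc K" using pos by auto
    then show "c (blk i) = c K" by (simp add: blk_eq)
  qed simp
  also have "\<dots> = 2^K * c K" by simp
  finally show ?case using Suc by (simp add: atLeast0LessThan)
qed

lemma block_sums:
  fixes c :: "nat \<Rightarrow> real"
  assumes c0: "\<And>k. c k \<ge> 0" and sg: "summable (\<lambda>k. 2^k * c k)"
  shows "(\<lambda>i. c (blk i)) sums (\<Sum>k. 2^k * c k)"
proof -
  define f where "f i = c (blk i)" for i
  have f0: "f i \<ge> 0" for i using c0 by (simp add: f_def)
  have bnd: "(\<Sum>i<n. f i) \<le> (\<Sum>k. 2^k * c k)" for n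
  proof -
    have "n \<le> 2^n - 1" using less_exp[of n] by linarith
    then have "(\<Sum>i<n. f i) \<le> (\<Sum>i<2^n - 1. f i)"
      by (intro sum_mono2) (auto simp: f0)
    also have "\<dots> = (\<Sum>k<n. 2^k * c k)" unfolding f_def by (rule blk_partial)
    also have "\<dots> \<le> (\<Sum>k. 2^k * c k)" by (intro sum_le_suminf sg) (auto simp: c0)
    finally show ?thesis .
  qed
  have sf: "summable f" by (rule summableI_nonneg_bounded[OF f0 bnd])
  have sm: "strict_mono (\<lambda>K::nat. (2::nat)^K - 1)"
    by (rule strict_monoI_Suc) (simp add: less_diff_conv)
  have "(\<lambda>K. \<Sum>i<2^K - 1. f i) \<longlonglongrightarrow> suminf f"
    using LIMSEQ_subseq_LIMSEQ[OF summable_LIMSEQ[OF sf] sm] by (simp add: o_def)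
  moreover have "(\<lambda>K. \<Sum>i<2^K - 1. f i) \<longlonglongrightarrow> (\<Sum>k. 2^k * c k)"
    unfolding f_def blk_partial by (rule summable_LIMSEQ[OF sg])
  ultimately have "suminf f = (\<Sum>k. 2^k * c k)" by (rule LIMSEQ_unique)
  with sf show ?thesis unfolding f_def[symmetric] by (metis summable_sums)
qed




definition vv :: "real \<Rightarrow> nat \<Rightarrow> real" where "vv p k = real (Suc k) powr (-p)"
definition SS :: "real \<Rightarrow> real" where "SS p = suminf (vv p)"
definition ww :: "real \<Rightarrow> nat \<Rightarrow> real" where "ww p k = vv p k / SS p"
definition tt :: "real \<Rightarrow> nat \<Rightarrow> real" where "tt p K = (\<Sum>k<K. ww p k)"
definition aa :: "real \<Rightarrow> nat \<Rightarrow> real" where "aa p k = (ww p k / 2^k) powr (1/p)"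
definition vecp :: "real \<Rightarrow> (nat \<Rightarrow> real) \<Rightarrow> nat \<Rightarrow> real" where "vecp p d = (\<lambda>i. aa p (blk i) * d (blk i))"
definition phi :: "real \<Rightarrow> nat \<Rightarrow> real \<Rightarrow> real" where "phi p k t = min t (tt p (Suc k)) - min t (tt p k)"
definition hh :: "real \<Rightarrow> nat \<Rightarrow> real \<Rightarrow> real" where "hh p k t = phi p k t / ww p k"
definition gam :: "real \<Rightarrow> real \<Rightarrow> nat \<Rightarrow> real" where "gam p t = vecp p (\<lambda>k. hh p k t)"
definition len :: "real \<Rightarrow> nat \<Rightarrow> real" where "len p k = ww p k powr (1/p)"
definition AA :: "real \<Rightarrow> real \<Rightarrow> nat \<Rightarrow> real" where "AA p r k = 2^k * aa p k powr r"

context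
  fixes p :: real
  assumes p: "1 < p"
begin

lemma vv_pos: "vv p k > 0" by (simp add: vv_def)

lemma vv_summable: "summable (vv p)"
proof -
  have "summable (\<lambda>n. real n powr (-p))" using p by (simp add: summable_real_powr_iff)
  then have "summable (\<lambda>n. real (Suc n) powr (-p))" by (subst summable_Suc_iff)
  then show ?thesis by (simp add: vv_def[abs_def])
qed

lemma SS_pos: "SS p > 0" unfolding SS_def by (intro suminf_pos vv_summable vv_pos)

lemma ww_pos: "ww p k > 0" using vv_pos SS_pos by (simp add: ww_def)

lemma ww_sums: "ww p sums 1"
proof -
  have "(\<lambda>k. vv p k / SS p) sums (SS p / SS p)" unfolding SS_def
    by (intro sums_divide summable_sums vv_summable)
  then show ?thesis using SS_pos by (simp add: ww_def[abs_def])
qed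

lemma ww_summable: "summable (ww p)" using ww_sums by (simp add: sums_iff)

lemma ww_le1: "ww p k \<le> 1"
  using sum_le_suminf[OF ww_summable, of "{k}"] ww_pos ww_sums by (auto simp: sums_iff less_imp_le)

lemma tt_0[simp]: "tt p 0 = 0" by (simp add: tt_def)
lemma tt_Suc: "tt p (Suc k) = tt p k + ww p k" by (simp add: tt_def)
lemma tt_mono: "j \<le> k \<Longrightarrow> tt p j \<le> tt p k"
  unfolding tt_def by (intro sum_mono2) (auto simp: ww_pos less_imp_le)
lemma tt_nonneg: "tt p k \<ge> 0" using tt_mono[of 0 k] by simp
lemma tt_le1: "tt p k \<le> 1"
  using sum_le_suminf[OF ww_summable, of "{..<k}"] ww_pos ww_sums
  by (auto simp: sums_iff less_imp_le tt_def)
lemma tt_lim: "tt p \<longlonglongrightarrow> 1"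
  using ww_sums by (simp add: sums_def tt_def[abs_def])

lemma aa_nonneg: "aa p k \<ge> 0" by (simp add: aa_def)

lemma AA_le: assumes "p \<le> r" shows "AA p r k \<le> ww p k" "AA p r k \<ge> 0"
proof -
  have x0: "ww p k / 2^k \<ge> 0" "ww p k / 2^k \<le> 1"
    using ww_pos[of k] ww_le1[of k] by (auto simp: field_simps order_trans[OF _ one_le_power])
  have "aa p k powr r = (ww p k / 2^k) powr (r / p)" unfolding aa_def by (simp add: powr_powr)
  also have "\<dots> \<le> (ww p k / 2^k) powr 1" using assms p x0 by (intro powr_mono') auto
  also have "\<dots> = ww p k / 2^k" using x0 ww_pos[of k] by simp
  finally show "AA p r k \<le> ww p k" unfolding AA_def by (simp add: field_simps)
  show "AA p r k \<ge> 0" by (simp add: AA_def)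
qed

lemma AA_p: "AA p p k = ww p k"
  using p ww_pos[of k] by (simp add: AA_def aa_def powr_powr less_imp_le)

lemma vec_norm:
  assumes r: "p \<le> r" and d: "\<And>k. \<bar>d k\<bar> \<le> 1"
  shows "summable (\<lambda>k. AA p r k * \<bar>d k\<bar> powr r)" "vecp p d \<in> lp r"
    "lp_norm r (vecp p d) = (\<Sum>k. AA p r k * \<bar>d k\<bar> powr r) powr (1/r)"
proof -
  have r0: "r > 0" using p r by simp
  define c where "c k = aa p k powr r * \<bar>d k\<bar> powr r" for k
  have c0: "c k \<ge> 0" for k by (simp add: c_def)
  have eq: "2^k * c k = AA p r k * \<bar>d k\<bar> powr r" for k by (simp add: c_def AA_def)
  have le: "AA p r k * \<bar>d k\<bar> powr r \<le> ww p k" for k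
  proof -
    have "\<bar>d k\<bar> powr r \<le> 1" using powr_mono2[of r "\<bar>d k\<bar>" 1] d[of k] r0 by simp
    then have "AA p r k * \<bar>d k\<bar> powr r \<le> AA p r k * 1" using AA_le[OF r] by (intro mult_left_mono) auto
    also have "\<dots> \<le> ww p k" using AA_le[OF r] by simp
    finally show ?thesis .
  qed
  show sA: "summable (\<lambda>k. AA p r k * \<bar>d k\<bar> powr r)"
    by (rule summable_comparison_test'[OF ww_summable]) (use le AA_le[OF r] in auto)
  have "(\<lambda>i. c (blk i)) sums (\<Sum>k. 2^k * c k)"
    by (rule block_sums[OF c0]) (use sA eq in simp)
  moreover have "c (blk i) = \<bar>vecp p d i\<bar> powr r" for i
    by (simp add: c_def vecp_def abs_mult powr_mult aa_nonneg)
  ultimately have "(\<lambda>i. \<bar>vecp p d i\<bar> powr r) sums (\<Sum>k. AA p r k * \<bar>d k\<bar> powr r)"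
    using eq by simp
  then show "vecp p d \<in> lp r" "lp_norm r (vecp p d) = (\<Sum>k. AA p r k * \<bar>d k\<bar> powr r) powr (1/r)"
    by (auto simp: lp_def lp_norm_def sums_iff)
qed

lemma vec_dist: "lp_dist r (vecp p d) (vecp p e) = lp_norm r (vecp p (\<lambda>k. d k - e k))"
  by (simp add: lp_dist_def vecp_def algebra_simps)

lemma phi_bounds: "0 \<le> phi p k t" "phi p k t \<le> ww p k"
  using tt_mono[of k "Suc k"] by (auto simp: phi_def min_def tt_Suc)

lemma hh_bounds: "0 \<le> hh p k t" "hh p k t \<le> 1"
  using phi_bounds[of k t] ww_pos[of k] by (auto simp: hh_def field_simps)

lemma phi_mono: "s \<le> t \<Longrightarrow> phi p k s \<le> phi p k t"
  using tt_mono[of k "Suc k"] by (auto simp: phi_def min_def)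

lemma phi_sums: assumes "0 \<le> s" "s \<le> t" "t \<le> 1"
  shows "(\<lambda>k. phi p k t - phi p k s) sums (t - s)"
proof -
  have "(\<Sum>k<K. phi p k t - phi p k s) = min t (tt p K) - min s (tt p K)" for K
  proof -
    have "(\<Sum>k<K. phi p k t - phi p k s) = (\<Sum>k<K. (min t (tt p (Suc k)) - min s (tt p (Suc k))) - (min t (tt p k) - min s (tt p k)))"
      by (simp add: phi_def algebra_simps)
    also have "\<dots> = (min t (tt p K) - min s (tt p K)) - (min t (tt p 0) - min s (tt p 0))"
      by (rule sum_lessThan_telescope)
    finally show ?thesis using assms by simp
  qed
  moreover have "(\<lambda>K. min t (tt p K) - min s (tt p K)) \<longlonglongrightarrow> min t 1 - min s 1"
    by (intro tendsto_intros tt_lim)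
  ultimately show ?thesis using assms by (simp add: sums_def)
qed

lemma phi_abs_sums: assumes "s \<in> {0..1}" "t \<in> {0..1}"
  shows "(\<lambda>k. \<bar>phi p k s - phi p k t\<bar>) sums \<bar>s - t\<bar>"
proof (cases "s \<le> t")
  case True
  then have "(\<lambda>k. phi p k t - phi p k s) sums (t - s)" using assms by (intro phi_sums) auto
  moreover have "\<bar>phi p k s - phi p k t\<bar> = phi p k t - phi p k s" for k using phi_mono[OF True] by simp
  ultimately show ?thesis using True by simp
next
  case False
  then have "(\<lambda>k. phi p k s - phi p k t) sums (s - t)" using assms by (intro phi_sums) auto
  moreover have "\<bar>phi p k s - phi p k t\<bar> = phi p k s - phi p k t" for k using phi_mono[of t s] False by simp
  ultimately show ?thesis using False by simp
qed

end



lemma interval_cover: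
  fixes D :: "nat \<Rightarrow> real set" and r :: "nat \<Rightarrow> real"
  assumes cov: "{a..b} \<subseteq> (\<Union>i. D i)" and r0: "\<And>i. r i \<ge> 0"
    and dm: "\<And>i x y. x \<in> D i \<Longrightarrow> y \<in> D i \<Longrightarrow> \<bar>x - y\<bar> \<le> r i"
  shows "ennreal (b - a) \<le> (\<Sum>i. ennreal (2 * r i))"
proof (cases "a \<le> b")
  case False then show ?thesis by (simp add: ennreal_neg)
next
  case True
  define x where "x i = (SOME x. x \<in> D i)" for i
  define I where "I i = (if D i = {} then {} else {x i - r i .. x i + r i})" for i
  have sub: "D i \<subseteq> I i" for i
  proof (cases "D i = {}")
    case False
    then have "x i \<in> D i" unfolding x_def by (simp add: some_in_eq)
    then show ?thesis using dm[of _ i "x i"] False by (force simp: I_def abs_le_iff)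
  qed (simp add: I_def)
  have mI: "emeasure lborel (I i) \<le> ennreal (2 * r i)" for i
    using r0[of i] by (auto simp: I_def)
  have "ennreal (b - a) = emeasure lborel {a..b}" using True by simp
  also have "\<dots> \<le> emeasure lborel (\<Union>i. I i)"
  proof (rule emeasure_mono)
    show "{a..b} \<subseteq> (\<Union>i. I i)" using cov sub by blast
    show "(\<Union>i. I i) \<in> sets lborel" by (auto simp: I_def)
  qed
  also have "\<dots> \<le> (\<Sum>i. emeasure lborel (I i))"
    by (intro emeasure_subadditive_countably) (auto simp: I_def)
  also have "\<dots> \<le> (\<Sum>i. ennreal (2 * r i))" by (intro suminf_le mI) auto
  finally show ?thesis .
qed

definition prof :: "nat \<Rightarrow> real \<Rightarrow> nat \<Rightarrow> real" where
  "prof K s k = (if k < K then 1 else if k = K then s else 0)"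

context
  fixes p :: real
  assumes p: "1 < p"
begin

lemma gam_norm: assumes "p \<le> r" shows "gam p t \<in> lp r"
  unfolding gam_def by (rule vec_norm(2)[OF p assms]) (use hh_bounds[OF p] in auto)

lemma gam_cont: assumes "s \<in> {0..1}" "t \<in> {0..1}"
  shows "lp_dist p (gam p s) (gam p t) \<le> \<bar>s - t\<bar> powr (1/p)"
proof -
  define d where "d k = hh p k s - hh p k t" for k
  have d1: "\<bar>d k\<bar> \<le> 1" for k using hh_bounds[OF p, of k s] hh_bounds[OF p, of k t] by (auto simp: d_def)
  note V = vec_norm[OF p order_refl d1]
  have "lp_dist p (gam p s) (gam p t) = lp_norm p (vecp p d)"
    unfolding gam_def d_def by (rule vec_dist[OF p])
  also have "\<dots> = (\<Sum>k. ww p k * \<bar>d k\<bar> powr p) powr (1/p)" using V(3) by (simp add: AA_p[OF p])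
  also have "\<dots> \<le> \<bar>s - t\<bar> powr (1/p)"
  proof (rule powr_mono2)
    have le: "ww p k * \<bar>d k\<bar> powr p \<le> \<bar>phi p k s - phi p k t\<bar>" for k
    proof -
      have "\<bar>d k\<bar> powr p \<le> \<bar>d k\<bar> powr 1" using d1[of k] p by (intro powr_mono') auto
      then have "ww p k * \<bar>d k\<bar> powr p \<le> ww p k * \<bar>d k\<bar>"
        using ww_pos[OF p, of k] by (intro mult_left_mono) auto
      also have "\<dots> = \<bar>phi p k s - phi p k t\<bar>"
      proof -
        have "hh p k s - hh p k t = (phi p k s - phi p k t) / ww p k"
          by (simp add: hh_def diff_divide_distrib)
        then show ?thesis using ww_pos[OF p, of k] by (simp add: d_def abs_divide)
      qed
      finally show ?thesis .
    qed
    have "(\<Sum>k. ww p k * \<bar>d k\<bar> powr p) \<le> (\<Sum>k. \<bar>phi p k s - phi p k t\<bar>)"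
      using V(1) phi_abs_sums[OF p assms] le by (intro suminf_le) (auto simp: AA_p[OF p] sums_iff)
    also have "\<dots> = \<bar>s - t\<bar>" using phi_abs_sums[OF p assms] by (simp add: sums_iff)
    finally show "(\<Sum>k. ww p k * \<bar>d k\<bar> powr p) \<le> \<bar>s - t\<bar>" .
    show "0 \<le> (\<Sum>k. ww p k * \<bar>d k\<bar> powr p)"
      using V(1) by (intro suminf_nonneg) (auto simp: AA_p[OF p] ww_pos[OF p] less_imp_le)
  qed (use p in auto)
  finally show ?thesis .
qed

lemma gam_curve: "lp_curve p (gam p ` {0..1})"
  unfolding lp_curve_def
proof (rule exI[of _ "gam p"], intro conjI ballI allI impI)
  show "gam p t \<in> lp p" for t by (rule gam_norm) simp
  fix t e assume t: "t \<in> {0..1::real}" and e: "(e::real) > 0"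
  show "\<exists>d>0. \<forall>s\<in>{0..1}. \<bar>s - t\<bar> < d \<longrightarrow> lp_dist p (gam p s) (gam p t) < e"
  proof (intro exI[of _ "e powr p"] conjI ballI impI)
    show "e powr p > 0" using e by simp
    fix s assume s: "s \<in> {0..1::real}" and st: "\<bar>s - t\<bar> < e powr p"
    have "lp_dist p (gam p s) (gam p t) \<le> \<bar>s - t\<bar> powr (1/p)" by (rule gam_cont[OF s t])
    also have "\<dots> < (e powr p) powr (1/p)" using st p by (intro powr_less_mono2) auto
    also have "\<dots> = e" using e p by (simp add: powr_powr)
    finally show "lp_dist p (gam p s) (gam p t) < e" .
  qed
qed simp


lemma hh_prof: assumes s: "s \<in> {0..1}"
  shows "hh p k (tt p K + s * ww p K) = prof K s k"
proof -
  define t where "t = tt p K + s * ww p K"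
  have wK: "ww p K > 0" by (rule ww_pos[OF p])
  have t1: "tt p K \<le> t" "t \<le> tt p (Suc K)" using s wK
    by (auto simp: t_def tt_Suc[OF p] mult_le_cancel_right1 intro: mult_left_le_one_le)
  show ?thesis
  proof (cases "k < K")
    case True
    then have "tt p (Suc k) \<le> tt p K" by (intro tt_mono[OF p]) simp
    then have "phi p k t = ww p k" using t1 tt_mono[OF p, of k "Suc k"] by (simp add: phi_def tt_Suc[OF p] min_def)
    then show ?thesis using True ww_pos[OF p, of k] by (simp add: t_def[symmetric] hh_def prof_def)
  next
    case False
    show ?thesis
    proof (cases "k = K")
      case True
      then have "phi p k t = s * ww p K" using t1 by (simp add: phi_def min_def t_def)
      then show ?thesis using True wK by (simp add: t_def[symmetric] hh_def prof_def)
    next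
      case F2: False
      then have "tt p (Suc K) \<le> tt p k" using False by (intro tt_mono[OF p]) simp
      then have "phi p k t = 0" using t1 tt_mono[OF p, of k "Suc k"] by (simp add: phi_def min_def)
      then show ?thesis using False F2 by (simp add: t_def[symmetric] hh_def prof_def)
    qed
  qed
qed

lemma gam_prof: "s \<in> {0..1} \<Longrightarrow> gam p (tt p K + s * ww p K) = vecp p (prof K s)"
  by (simp add: gam_def hh_prof)

lemma norm_lower: assumes d1: "\<And>k. \<bar>d k\<bar> \<le> 1"
  shows "len p k * \<bar>d k\<bar> \<le> lp_norm p (vecp p d)"
proof -
  note V = vec_norm[OF p order_refl d1]
  have "len p k * \<bar>d k\<bar> = (ww p k * \<bar>d k\<bar> powr p) powr (1/p)"
    using p by (simp add: len_def powr_mult powr_powr)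
  also have "\<dots> \<le> (\<Sum>k. ww p k * \<bar>d k\<bar> powr p) powr (1/p)"
    using V(1) sum_le_suminf[of "\<lambda>k. ww p k * \<bar>d k\<bar> powr p" "{k}"] p ww_pos[OF p]
    by (intro powr_mono2) (auto simp: AA_p[OF p] less_imp_le)
  also have "\<dots> = lp_norm p (vecp p d)" using V(3) by (simp add: AA_p[OF p])
  finally show ?thesis .
qed

lemma len_eq: "len p k = 1 / (real (Suc k) * SS p powr (1/p))"
proof -
  have "len p k = (real (Suc k) powr (-p)) powr (1/p) / SS p powr (1/p)"
    by (simp add: len_def ww_def vv_def powr_divide)
  also have "(real (Suc k) powr (-p)) powr (1/p) = real (Suc k) powr (-1)"
    unfolding powr_powr using p by simp
  also have "real (Suc k) powr (-1) = 1 / real (Suc k)"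
    by (simp add: powr_minus divide_inverse)
  finally show ?thesis by simp
qed

lemma len_pos: "len p k > 0" using SS_pos[OF p] by (simp add: len_eq)

lemma len_mono: "j \<le> k \<Longrightarrow> len p k \<le> len p j"
  using SS_pos[OF p] by (simp add: len_eq frac_le mult_right_mono)

end



definition pos :: "real \<Rightarrow> nat \<Rightarrow> real \<Rightarrow> real" where
  "pos p K s = (\<Sum>k<K. len p k) + s * len p K"

lemma lp_dist_sym: "lp_dist r x y = lp_dist r y x"
  by (simp add: lp_dist_def lp_norm_def abs_minus_commute)

context
  fixes p :: real
  assumes p: "1 < p"
begin

lemma prof_bounds: "s \<in> {0..1} \<Longrightarrow> 0 \<le> prof K s k \<and> prof K s k \<le> 1"
  by (auto simp: prof_def)

lemma key0:
  assumes KK: "K \<le> K'" "K' \<le> N" and s: "s \<in> {0..1}" and s': "s' \<in> {0..1}"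
    and lt: "lp_dist p (vecp p (prof K s)) (vecp p (prof K' s')) < len p N"
  shows "\<bar>pos p K s - pos p K' s'\<bar> \<le> 2 * lp_dist p (vecp p (prof K s)) (vecp p (prof K' s'))"
proof -
  define D where "D = lp_dist p (vecp p (prof K s)) (vecp p (prof K' s'))"
  define d where "d k = prof K s k - prof K' s' k" for k
  have d1: "\<bar>d k\<bar> \<le> 1" for k using prof_bounds[OF s, of K k] prof_bounds[OF s', of K' k]
    by (auto simp: d_def)
  have DD: "D = lp_norm p (vecp p d)" unfolding D_def d_def by (rule vec_dist[OF p])
  have low: "len p k * \<bar>d k\<bar> \<le> D" for k unfolding DD by (rule norm_lower[OF p d1])
  have D0: "D \<ge> 0" using low[of 0] len_pos[OF p, of 0] by (smt (verit) mult_nonneg_nonneg)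
  consider "K' = K" | "K' = Suc K" | "Suc K < K'" using KK by linarith
  then have "\<bar>pos p K s - pos p K' s'\<bar> \<le> 2 * D"
  proof cases
    case 1
    have "d K = s - s'" using 1 by (simp add: d_def prof_def)
    then have "\<bar>pos p K s - pos p K' s'\<bar> = len p K * \<bar>d K\<bar>"
      using 1 len_pos[OF p, of K] by (simp add: pos_def abs_mult left_diff_distrib[symmetric])
    then show ?thesis using low[of K] D0 by simp
  next
    case 2
    have a: "d K = s - 1" "d (Suc K) = - s'" using 2 by (auto simp: d_def prof_def)
    have "pos p K s - pos p K' s' = - (len p K * (1 - s) + len p (Suc K) * s')"
      using 2 by (simp add: pos_def algebra_simps)
    moreover have "len p K * (1 - s) \<ge> 0" "len p (Suc K) * s' \<ge> 0"
      using s s' len_pos[OF p, of K] len_pos[OF p, of "Suc K"] by auto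
    moreover have "len p K * (1 - s) \<le> D" "len p (Suc K) * s' \<le> D"
      using low[of K] low[of "Suc K"] a s s' by auto
    ultimately show ?thesis by linarith
  next
    case 3
    have "d (Suc K) = - 1" using 3 by (simp add: d_def prof_def)
    then have "len p (Suc K) \<le> D" using low[of "Suc K"] by simp
    moreover have "len p N \<le> len p (Suc K)" using 3 KK by (intro len_mono[OF p]) simp
    ultimately show ?thesis using lt unfolding D_def by simp
  qed
  then show ?thesis by (simp add: D_def)
qed

lemma key:
  assumes KK: "K \<le> N" "K' \<le> N" and s: "s \<in> {0..1}" and s': "s' \<in> {0..1}"
    and lt: "lp_dist p (vecp p (prof K s)) (vecp p (prof K' s')) < len p N"
  shows "\<bar>pos p K s - pos p K' s'\<bar> \<le> 2 * lp_dist p (vecp p (prof K s)) (vecp p (prof K' s'))"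
proof (cases "K \<le> K'")
  case True then show ?thesis using key0[OF True KK(2) s s' lt] by simp
next
  case False
  then have "K' \<le> K" by simp
  from key0[OF this KK(1) s' s] lt show ?thesis by (simp add: lp_dist_sym abs_minus_commute)
qed

lemma covering: "u \<in> {0..(\<Sum>k<N. len p k)} \<Longrightarrow> \<exists>K\<le>N. \<exists>s\<in>{0..1}. u = pos p K s"
proof (induction N arbitrary: u)
  case 0 then show ?case by (intro exI[of _ 0]) (auto simp: pos_def)
next
  case (Suc N)
  show ?case
  proof (cases "u \<le> (\<Sum>k<N. len p k)")
    case True
    from Suc.IH[of u] Suc.prems True obtain K s where "K \<le> N" "s \<in> {0..1}" "u = pos p K s" by auto
    then show ?thesis by (intro exI[of _ K]) auto
  next
    case False
    define s where "s = (u - (\<Sum>k<N. len p k)) / len p N"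
    have lp: "len p N > 0" by (rule len_pos[OF p])
    have "s \<in> {0..1}" using False Suc.prems lp by (auto simp: s_def field_simps)
    moreover have "u = pos p N s" using lp by (simp add: pos_def s_def)
    ultimately show ?thesis by (intro exI[of _ N]) auto
  qed
qed

lemma Pt_in: assumes s: "s \<in> {0..1}" shows "vecp p (prof K s) \<in> gam p ` {0..1}"
proof -
  have "tt p K + s * ww p K \<in> {0..1}"
  proof -
    have "s * ww p K \<le> ww p K" using s ww_pos[OF p, of K] by (simp add: mult_left_le_one_le)
    then have "tt p K + s * ww p K \<le> tt p (Suc K)" by (simp add: tt_Suc[OF p])
    moreover have "0 \<le> tt p K + s * ww p K" using tt_nonneg[OF p, of K] ww_pos[OF p, of K] s by simp
    ultimately show ?thesis using tt_le1[OF p, of "Suc K"] by simp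
  qed
  then show ?thesis using gam_prof[OF p s, of K] by (metis image_eqI)
qed

lemma diam_upper: "x \<in> C \<Longrightarrow> y \<in> C \<Longrightarrow> ennreal (lp_dist r x y) \<le> lp_diam r C"
  unfolding lp_diam_def by (rule SUP_upper2[of "(x,y)"]) auto

lemma lower_bound: "ennreal ((\<Sum>k<N. len p k) / 4) \<le> lp_H1 p (gam p ` {0..1})"
proof -
  define \<delta> where "\<delta> = len p N / 2"
  have d0: "\<delta> > 0" using len_pos[OF p, of N] by (simp add: \<delta>_def)
  have "ennreal ((\<Sum>k<N. len p k) / 4) \<le> lp_H1_delta p \<delta> (gam p ` {0..1})"
    unfolding lp_H1_delta_def
  proof (rule INF_greatest)
    fix C :: "nat \<Rightarrow> (nat \<Rightarrow> real) set"
    assume "C \<in> {C. gam p ` {0..1} \<subseteq> (\<Union>i. C i) \<and> (\<forall>i. C i \<subseteq> lp p \<and> lp_diam p (C i) \<le> ennreal \<delta>)}"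
    then have cov: "gam p ` {0..1} \<subseteq> (\<Union>i. C i)" and dm: "\<And>i. lp_diam p (C i) \<le> ennreal \<delta>" by auto
    have fin: "lp_diam p (C i) < top" for i using dm[of i] by (simp add: le_less_trans)
    define r where "r i = 2 * enn2real (lp_diam p (C i))" for i
    define D where "D i = {pos p K s | K s. K \<le> N \<and> s \<in> {0..1} \<and> vecp p (prof K s) \<in> C i}" for i
    have Dcov: "{0..(\<Sum>k<N. len p k)} \<subseteq> (\<Union>i. D i)"
    proof
      fix u assume "u \<in> {0..(\<Sum>k<N. len p k)}"
      then obtain K s where K: "K \<le> N" "s \<in> {0..1}" "u = pos p K s" using covering by blast
      then obtain i where "vecp p (prof K s) \<in> C i" using Pt_in[OF K(2), of K] cov by blast
      then show "u \<in> (\<Union>i. D i)" using K unfolding D_def by blast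
    qed
    have Ddm: "\<bar>x - y\<bar> \<le> r i" if xD: "x \<in> D i" and yD: "y \<in> D i" for i x y
    proof -
      obtain K s where A: "K \<le> N" "s \<in> {0..1}" "vecp p (prof K s) \<in> C i" "x = pos p K s"
        using xD unfolding D_def by blast
      obtain K' s' where B: "K' \<le> N" "s' \<in> {0..1}" "vecp p (prof K' s') \<in> C i" "y = pos p K' s'"
        using yD unfolding D_def by blast
      define dd where "dd = lp_dist p (vecp p (prof K s)) (vecp p (prof K' s'))"
      have e1: "ennreal dd \<le> lp_diam p (C i)" unfolding dd_def by (rule diam_upper[OF A(3) B(3)])
      have "dd \<le> enn2real (lp_diam p (C i))"
        using enn2real_mono[OF e1 fin[of i]] by (simp add: dd_def lp_dist_def lp_norm_def)
      moreover have "ennreal dd \<le> ennreal \<delta>" using e1 dm[of i] by simp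
      then have "dd \<le> \<delta>" using d0 by simp
      then have "dd < len p N" using d0 by (simp add: \<delta>_def)
      then have "\<bar>x - y\<bar> \<le> 2 * dd" using key[OF A(1) B(1) A(2) B(2)] A(4) B(4) by (simp add: dd_def)
      ultimately show ?thesis by (simp add: r_def)
    qed
    have "ennreal ((\<Sum>k<N. len p k) - 0) \<le> (\<Sum>i. ennreal (2 * r i))"
      by (rule interval_cover[OF Dcov _ Ddm]) (simp add: r_def)
    also have "(\<Sum>i. ennreal (2 * r i)) = (\<Sum>i. 4 * lp_diam p (C i))"
    proof -
      have "ennreal (2 * r i) = 4 * lp_diam p (C i)" for i
        using fin[of i] by (simp add: r_def ennreal_mult' ennreal_enn2real)
      then show ?thesis by simp
    qed
    also have "\<dots> = 4 * (\<Sum>i. lp_diam p (C i))" by simp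
    finally have *: "ennreal (\<Sum>k<N. len p k) \<le> 4 * (\<Sum>i. lp_diam p (C i))" by simp
    have "ennreal (\<Sum>k<N. len p k) = 4 * ennreal ((\<Sum>k<N. len p k) / 4)"
      using ennreal_mult'[of 4 "(\<Sum>k<N. len p k)/4"] by simp
    with * show "ennreal ((\<Sum>k<N. len p k) / 4) \<le> (\<Sum>i. lp_diam p (C i))"
      by (simp add: ennreal_mult_le_mult_iff)
  qed
  also have "\<dots> \<le> lp_H1 p (gam p ` {0..1})"
    unfolding lp_H1_def by (rule SUP_upper) (use d0 in simp)
  finally show ?thesis .
qed

lemma H1_infinite: "lp_H1 p (gam p ` {0..1}) = \<infinity>"
proof (rule ccontr)
  assume "lp_H1 p (gam p ` {0..1}) \<noteq> \<infinity>"
  then obtain x where x: "lp_H1 p (gam p ` {0..1}) = ennreal x" "x \<ge> 0"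
    by (cases "lp_H1 p (gam p ` {0..1})") auto
  have bnd: "(\<Sum>k<N. len p k) \<le> 4 * x" for N
    using lower_bound[of N] x by simp
  have "summable (len p)"
    by (rule summableI_nonneg_bounded[OF _ bnd]) (use len_pos[OF p] in \<open>simp add: less_imp_le\<close>)
  then have "summable (\<lambda>k. SS p powr (1/p) * len p k)"
    by (rule summable_mult)
  moreover have "SS p powr (1/p) * len p k = inverse (real (Suc k))" for k
  proof -
    have h: "SS p powr (1/p) > 0" using SS_pos[OF p] by simp
    have n: "real (Suc k) > 0" by simp
    have "SS p powr (1/p) * len p k = SS p powr (1/p) / (real (Suc k) * SS p powr (1/p))"
      by (simp add: len_eq[OF p])
    also have "\<dots> = 1 / real (Suc k)" using h n by (metis div_by_1 divide_divide_eq_left' divide_self_if less_irrefl mult.commute)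
    finally show ?thesis by (simp add: divide_inverse)
  qed
  ultimately have "summable (\<lambda>k. inverse (real (Suc k)))" by simp
  then have "summable (\<lambda>n. inverse (real n))"
    using summable_Suc_iff[of "\<lambda>n. inverse (real n)"] by simp
  then show False using not_summable_harmonic by blast
qed

end



context
  fixes p q :: real
  assumes p: "1 < p" and pq: "p < q"
begin

definition cc :: real where "cc = (1/p - 1/q) * ln 2"
definition mu :: real where "mu = min 1 (cc / (p - 1))"
definition Lq :: real where "Lq = exp ((p - 1) * ln (1 / mu) + (1 - 1/p) * ln (SS p))"

lemma cc_pos: "cc > 0"
proof -
  have "1/q < 1/p" using p pq by (simp add: frac_less2)
  then show ?thesis by (simp add: cc_def)
qed

lemma mu_pos: "mu > 0" using cc_pos p by (simp add: mu_def)

lemma key_log: "(p - 1) * ln (real (Suc k)) \<le> cc * k + (p - 1) * ln (1 / mu)"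
proof -
  define x where "x = real (Suc k)"
  have x0: "x > 0" by (simp add: x_def)
  have "mu * x \<le> 1 + (cc / (p - 1)) * k"
  proof -
    have m1: "mu \<le> 1" and m2: "mu \<le> cc / (p - 1)" by (auto simp: mu_def)
    have "mu * real k \<le> (cc / (p - 1)) * real k" by (rule mult_right_mono[OF m2]) simp
    moreover have "mu * x = mu + mu * real k" by (simp add: x_def algebra_simps)
    ultimately show ?thesis using m1 by linarith
  qed
  moreover have "cc / (p - 1) * k \<ge> 0" using cc_pos p by simp
  ultimately have "ln (mu * x) \<le> (cc / (p - 1)) * k"
    using mu_pos x0 ln_add_one_self_le_self[of "cc / (p - 1) * k"] ln_le_cancel_iff[of "mu * x" "1 + cc / (p - 1) * k"]
    by (smt (verit) mult_pos_pos)
  then have "ln x \<le> (cc / (p - 1)) * k + ln (1 / mu)"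
    using mu_pos x0 by (simp add: ln_mult ln_div)
  then have "(p - 1) * ln x \<le> (p - 1) * ((cc / (p - 1)) * k + ln (1 / mu))"
    using p by (intro mult_left_mono) auto
  also have "\<dots> = cc * k + (p - 1) * ln (1 / mu)" using p by (simp add: field_simps)
  finally show ?thesis by (simp add: x_def)
qed

lemma ell_bound: "AA p q k powr (1/q) \<le> Lq * ww p k"
proof -
  define x where "x = real (Suc k)"
  define lw where "lw = ln (ww p k)"
  define lS where "lS = ln (SS p)"
  define lx where "lx = ln x"
  have S0: "SS p > 0" by (rule SS_pos[OF p])
  have w0: "ww p k > 0" by (rule ww_pos[OF p])
  have q0: "q > 0" using p pq by simp
  have elw: "lw = - p * lx - lS"
    using S0 by (simp add: lw_def lx_def lS_def x_def ww_def vv_def ln_div)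
  have aq: "aa p k powr q = (ww p k / 2^k) powr (q / p)"
    by (simp add: aa_def powr_powr)
  have A0: "AA p q k > 0" using w0 by (simp add: AA_def aq)
  have eA: "ln (AA p q k) = k * ln 2 + (q/p) * (lw - k * ln 2)"
    using w0 by (simp add: AA_def aq ln_mult ln_div ln_realpow lw_def)
  have e1: "ln (AA p q k powr (1/q)) = k * ln 2 / q + lw / p - k * ln 2 / p"
    using q0 p by (simp add: eA field_simps)
  have e2: "lw / p - lw = (p - 1) * lx + (1 - 1/p) * lS"
    using p by (simp add: elw field_simps)
  have e3: "cc * k = k * ln 2 / p - k * ln 2 / q"
    by (simp add: cc_def field_simps)
  have key: "(p - 1) * lx \<le> cc * k + (p - 1) * ln (1 / mu)"
    unfolding lx_def x_def by (rule key_log)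
  have L: "ln (AA p q k powr (1/q)) \<le> ((p - 1) * ln (1 / mu) + (1 - 1/p) * lS) + lw"
    using e1 e2 e3 key by linarith
  have "AA p q k powr (1/q) > 0" using A0 by simp
  then have "AA p q k powr (1/q) = exp (ln (AA p q k powr (1/q)))" by (simp only: exp_ln)
  also have "\<dots> \<le> exp (((p - 1) * ln (1 / mu) + (1 - 1/p) * lS) + lw)" using L by simp
  also have "\<dots> = Lq * ww p k" using w0 by (simp add: exp_add Lq_def lS_def lw_def)
  finally show ?thesis .
qed

lemma Lq_pos: "Lq > 0" by (simp add: Lq_def)

lemma ww_d: "ww p k * \<bar>hh p k s - hh p k t\<bar> = \<bar>phi p k s - phi p k t\<bar>"
proof -
  have "hh p k s - hh p k t = (phi p k s - phi p k t) / ww p k"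
    by (simp add: hh_def diff_divide_distrib)
  then show ?thesis using ww_pos[OF p, of k] by (simp add: abs_divide)
qed

lemma gam_lip: assumes st: "s \<in> {0..1}" "t \<in> {0..1}"
  shows "lp_dist q (gam p s) (gam p t) \<le> Lq * \<bar>s - t\<bar>"
proof -
  have pq': "p \<le> q" using pq by simp
  have q0: "q > 0" using p pq by simp
  define d where "d k = hh p k s - hh p k t" for k
  have d1: "\<bar>d k\<bar> \<le> 1" for k using hh_bounds[OF p, of k s] hh_bounds[OF p, of k t] by (auto simp: d_def)
  note V = vec_norm[OF p pq' d1]
  define y where "y k = AA p q k powr (1/q) * \<bar>d k\<bar>" for k
  have y0: "y k \<ge> 0" for k by (simp add: y_def)
  have yq: "\<bar>y k\<bar> powr q = AA p q k * \<bar>d k\<bar> powr q" for k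
    using q0 AA_le[OF p pq', of k] by (simp add: y_def powr_mult powr_powr abs_mult)
  have yb: "y k \<le> Lq * \<bar>phi p k s - phi p k t\<bar>" for k
  proof -
    have "y k \<le> Lq * ww p k * \<bar>d k\<bar>" unfolding y_def
      by (intro mult_right_mono ell_bound) auto
    also have "\<dots> = Lq * \<bar>phi p k s - phi p k t\<bar>" by (simp add: d_def ww_d[symmetric])
    finally show ?thesis .
  qed
  have sphi: "summable (\<lambda>k. Lq * \<bar>phi p k s - phi p k t\<bar>)"
    using phi_abs_sums[OF p st] by (intro summable_mult) (simp add: sums_iff)
  have sy: "summable y" by (rule summable_comparison_test'[OF sphi]) (use yb y0 in simp)
  have y1: "y \<in> lp 1" using sy y0 by (simp add: lp_def)
  have "lp_dist q (gam p s) (gam p t) = lp_norm q (vecp p d)"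
    unfolding gam_def d_def by (rule vec_dist[OF p])
  also have "\<dots> = lp_norm q y" using V(3) by (simp add: lp_norm_def yq)
  also have "\<dots> \<le> lp_norm 1 y" using lp_norm_mono[of 1 q y] y1 pq p by simp
  also have "\<dots> = (\<Sum>k. y k)" using y0 suminf_nonneg[OF sy y0] by (simp add: lp_norm_def)
  also have "\<dots> \<le> (\<Sum>k. Lq * \<bar>phi p k s - phi p k t\<bar>)" by (intro suminf_le yb sy sphi)
  also have "\<dots> = Lq * \<bar>s - t\<bar>" using phi_abs_sums[OF p st] by (simp add: sums_iff suminf_mult)
  finally show ?thesis .
qed

lemma diam_seg: assumes "0 \<le> a" "a \<le> b" "b \<le> 1"
  shows "lp_diam q (gam p ` {a..b}) \<le> ennreal (Lq * (b - a))"
  unfolding lp_diam_def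
proof (rule SUP_least)
  fix xy assume "xy \<in> gam p ` {a..b} \<times> gam p ` {a..b}"
  then obtain u v where uv: "u \<in> {a..b}" "v \<in> {a..b}" "xy = (gam p u, gam p v)" by auto
  have "lp_dist q (gam p u) (gam p v) \<le> Lq * \<bar>u - v\<bar>" using uv assms by (intro gam_lip) auto
  also have "\<dots> \<le> Lq * (b - a)" using uv Lq_pos by (intro mult_left_mono) auto
  finally show "ennreal (lp_dist q (fst xy) (snd xy)) \<le> ennreal (Lq * (b - a))"
    using uv by (simp add: ennreal_leI)
qed

lemma H1q_delta: assumes d: "\<delta> > 0" shows "lp_H1_delta q \<delta> (gam p ` {0..1}) \<le> ennreal Lq"
proof -
  define n where "n = nat \<lceil>Lq / \<delta>\<rceil> + 1"
  have n1: "n \<ge> 1" by (simp add: n_def)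
  have nr: "real n > 0" using n1 by simp
  have "Lq / \<delta> \<le> real n" unfolding n_def by linarith
  then have Ln: "Lq / real n \<le> \<delta>" using d nr by (simp add: field_simps)
  define C where "C j = (if j < n then gam p ` {real j / n..(real j + 1) / n} else {})" for j
  have seg: "0 \<le> real j / n" "real j / n \<le> (real j + 1) / n" "j < n \<Longrightarrow> (real j + 1) / n \<le> 1" for j
    using nr by (auto simp: field_simps)
  have dC: "lp_diam q (C j) \<le> ennreal (Lq / n)" for j
  proof (cases "j < n")
    case True
    have "lp_diam q (C j) \<le> ennreal (Lq * ((real j + 1) / n - real j / n))"
      unfolding C_def using True seg[of j] by (simp add: diam_seg)
    also have "Lq * ((real j + 1) / n - real j / n) = Lq / n" 
    proof -
      have "(real j + 1) / n - real j / n = 1 / n" by (simp add: diff_divide_distrib[symmetric])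
      then show ?thesis by simp
    qed
    finally show ?thesis .
  qed (simp add: C_def lp_diam_def)
  have cov: "gam p ` {0..1} \<subseteq> (\<Union>j. C j)"
  proof
    fix x assume "x \<in> gam p ` {0..1}"
    then obtain t where t: "t \<in> {0..1}" "x = gam p t" by auto
    have "\<exists>j<n. real j / n \<le> t \<and> t \<le> (real j + 1) / n"
    proof (cases "t = 1")
      case True
      then show ?thesis using n1 nr by (intro exI[of _ "n - 1"]) (auto simp: field_simps of_nat_diff)
    next
      case False
      define j where "j = nat \<lfloor>t * n\<rfloor>"
      have tn: "0 \<le> t * n" "t * n < n" using t False nr by auto
      have fl: "real j \<le> t * n" "t * n < real j + 1" using tn by (auto simp: j_def)
      have "j < n" using fl tn by linarith
      moreover have "real j / n \<le> t" "t \<le> (real j + 1) / n" using fl nr by (auto simp: field_simps)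
      ultimately show ?thesis by blast
    qed
    then obtain j where "j < n" "real j / n \<le> t" "t \<le> (real j + 1) / n" by blast
    then show "x \<in> (\<Union>j. C j)" using t by (auto simp: C_def)
  qed
  have Cq: "C j \<subseteq> lp q" for j using gam_norm[OF p] pq by (auto simp: C_def)
  have Cin: "C \<in> {C. gam p ` {0..1} \<subseteq> (\<Union>i. C i) \<and> (\<forall>i. C i \<subseteq> lp q \<and> lp_diam q (C i) \<le> ennreal \<delta>)}"
    using cov Cq dC Ln order_trans ennreal_leI by (smt (verit) mem_Collect_eq)
  have "lp_H1_delta q \<delta> (gam p ` {0..1}) \<le> (\<Sum>j. lp_diam q (C j))"
    unfolding lp_H1_delta_def by (rule INF_lower[OF Cin])
  also have "(\<Sum>j. lp_diam q (C j)) = (\<Sum>j<n. lp_diam q (C j))"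
    by (rule suminf_finite) (auto simp: C_def lp_diam_def bot_ennreal)
  also have "\<dots> \<le> (\<Sum>j<n. ennreal (Lq / n))" by (intro sum_mono dC)
  also have "\<dots> = ennreal (\<Sum>j<n. Lq / n)" using nr Lq_pos by (intro sum_ennreal) simp
  also have "(\<Sum>j<n. Lq / n) = Lq" using nr by simp
  finally show ?thesis .
qed

lemma H1q_finite: "lp_H1 q (gam p ` {0..1}) < \<infinity>"
proof -
  have "lp_H1 q (gam p ` {0..1}) \<le> ennreal Lq"
    unfolding lp_H1_def by (rule SUP_least) (auto intro: H1q_delta)
  then show ?thesis by (simp add: le_less_trans)
qed

end


theorem proposition1p1:
  fixes p :: real
  assumes "1 < p"
  shows "(\<forall>q\<ge>p. lp p \<subseteq> lp q \<and>
            (\<forall>\<Gamma>. lp_rectifiable_curve p \<Gamma> \<longrightarrow> lp_rectifiable_curve q \<Gamma>)) \<and>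
         (\<exists>\<Gamma>. lp_curve p \<Gamma> \<and> (\<forall>q>p. lp_H1 q \<Gamma> < \<infinity>) \<and> lp_H1 p \<Gamma> = \<infinity>)"
proof
  show "\<forall>q\<ge>p. lp p \<subseteq> lp q \<and>
            (\<forall>\<Gamma>. lp_rectifiable_curve p \<Gamma> \<longrightarrow> lp_rectifiable_curve q \<Gamma>)"
    using partA[OF assms] by blast
  show "\<exists>\<Gamma>. lp_curve p \<Gamma> \<and> (\<forall>q>p. lp_H1 q \<Gamma> < \<infinity>) \<and> lp_H1 p \<Gamma> = \<infinity>"
    using gam_curve[OF assms] H1q_finite[OF assms] H1_infinite[OF assms] by blast
qed

end
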